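(* Fix a state $(\mathbf x(n),\mathbf g(n))$ of the model in the context and two feasible withdrawal vectors $\mathbf y(n)$ and $\mathbf y'(n)$. Then $\mathbf y'(n)$ can be obtained from $\mathbf y(n)$ by performing a sequence of feasible single-server reallocations.
   Context: Model: real queues $1,\dots,L$, dummy queue $0$, $K$ identical servers. State: queue lengths $x_i(n)\in\mathbb Z_+$ ($x_0=0$), connectivities $g_{i,j}(n)\in\{0,1\}$ ($g_{0,j}=1$). A scheduling control $\mathbf q\in\{0,\dots,L\}^K$ (server $j$ serves $q_j$, $0$ = idle) is feasible if $g_{q_j,j}=1$ for all $j$ and each real queue $i$ gets at most $x_i$ servers; its withdrawal vector is $y_i=\#\{j:q_j=i\}$; a withdrawal vector is feasible if it arises from a feasible control (an implementation of it). Given a feasible withdrawal vector with implementation $\mathbf q$, a feasible single-server reallocation from queue $t$ to queue $f$ changes $q_k$ from $t$ to $f$ for a single server $k$ with $q_k=t$, such that the new control is again feasible; the new withdrawal vector is the old one plus $\mathbf I(f,t)$, where $\mathbf I(f,t)$ has $+1$ at $f$, $-1$ at $t$ and $0$ elsewhere ($\mathbf I(f,f)=0$). *)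

theory Defs
  imports Main
begin

text \<open>Queues are indexed by 0..L (0 = dummy queue), servers by 1..K.
  A state consists of queue lengths x :: nat => nat and connectivities
  g :: nat => nat => bool (g i j: queue i connected to server j).
  A scheduling control is q :: nat => nat (server j serves queue q j);
  only the values on servers 1..K matter.\<close>

definition num_alloc :: "nat \<Rightarrow> (nat \<Rightarrow> nat) \<Rightarrow> nat \<Rightarrow> nat" where
  "num_alloc K q i = card {j \<in> {1..K}. q j = i}"

definition feasible_control ::
  "nat \<Rightarrow> nat \<Rightarrow> (nat \<Rightarrow> nat) \<Rightarrow> (nat \<Rightarrow> nat \<Rightarrow> bool) \<Rightarrow> (nat \<Rightarrow> nat) \<Rightarrow> bool" where
  "feasible_control L K x g q \<longleftrightarrow>
     (\<forall>j\<in>{1..K}. q j \<le> L \<and> g (q j) j) \<and>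
     (\<forall>i\<in>{1..L}. num_alloc K q i \<le> x i)"

text \<open>Withdrawal vector of a control: y i = #{j : q j = i}, for i = 0..L
  (and automatically 0 for i > L when the control is feasible).\<close>
definition withdrawal :: "nat \<Rightarrow> (nat \<Rightarrow> nat) \<Rightarrow> (nat \<Rightarrow> nat)" where
  "withdrawal K q = (\<lambda>i. num_alloc K q i)"

definition feasible_withdrawal ::
  "nat \<Rightarrow> nat \<Rightarrow> (nat \<Rightarrow> nat) \<Rightarrow> (nat \<Rightarrow> nat \<Rightarrow> bool) \<Rightarrow> (nat \<Rightarrow> nat) \<Rightarrow> bool" where
  "feasible_withdrawal L K x g y \<longleftrightarrow>
     (\<exists>q. feasible_control L K x g q \<and> withdrawal K q = y)"

definition feasible_realloc ::
  "nat \<Rightarrow> nat \<Rightarrow> (nat \<Rightarrow> nat) \<Rightarrow> (nat \<Rightarrow> nat \<Rightarrow> bool) \<Rightarrow> (nat \<Rightarrow> nat) \<Rightarrow> (nat \<Rightarrow> nat) \<Rightarrow> bool" where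
  "feasible_realloc L K x g y y' \<longleftrightarrow>
     (\<exists>q k f t. feasible_control L K x g q \<and> withdrawal K q = y \<and>
        k \<in> {1..K} \<and> q k = t \<and> f \<le> L \<and>
        feasible_control L K x g (q(k := f)) \<and>
        y' = withdrawal K (q(k := f)))"

end

theory Submission
  imports Defs
begin

definition mix :: "(nat \<Rightarrow> nat) \<Rightarrow> nat set \<Rightarrow> nat \<Rightarrow> nat" where
  "mix q S = (\<lambda>j. if j \<in> S then q j else 0)"

lemma mix_feasible:
  assumes "\<forall>j. g 0 j" "feasible_control L K x g q"
  shows "feasible_control L K x g (mix q S)"
proof -
  have "num_alloc K (mix q S) i \<le> num_alloc K q i" if "i \<in> {1..L}" for i
    unfolding num_alloc_def
    by (rule card_mono) (use that in \<open>auto simp: mix_def split: if_splits\<close>)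
  then show ?thesis using assms unfolding feasible_control_def mix_def
    by (auto intro: order_trans) (meson atLeastAtMost_iff order_trans)
qed

lemma mix_full: "withdrawal K (mix q {1..K}) = withdrawal K q"
  unfolding withdrawal_def num_alloc_def mix_def
  by (intro ext arg_cong[where f=card]) auto

lemma down:
  assumes g0: "\<forall>j. g 0 j" and fq: "feasible_control L K x g q"
    and "finite S" "S \<subseteq> {1..K}"
  shows "(feasible_realloc L K x g)\<^sup>*\<^sup>* (withdrawal K (mix q S)) (withdrawal K (mix q {}))
       \<and> (feasible_realloc L K x g)\<^sup>*\<^sup>* (withdrawal K (mix q {})) (withdrawal K (mix q S))"
  using assms(3,4)
proof (induction S rule: finite_induct)
  case empty then show ?case by simp
next
  case (insert a S)
  have e1: "(mix q (insert a S))(a := 0) = mix q S"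
    using insert(2) by (auto simp: mix_def)
  have e2: "(mix q S)(a := q a) = mix q (insert a S)"
    by (auto simp: mix_def)
  have aK: "a \<in> {1..K}" using insert by auto
  have qa: "q a \<le> L" using fq aK unfolding feasible_control_def by auto
  have s1: "feasible_realloc L K x g (withdrawal K (mix q (insert a S))) (withdrawal K (mix q S))"
    unfolding feasible_realloc_def
    apply (rule exI[of _ "mix q (insert a S)"], rule exI[of _ a], rule exI[of _ 0])
    using mix_feasible[OF g0 fq] aK e1 by auto
  have s2: "feasible_realloc L K x g (withdrawal K (mix q S)) (withdrawal K (mix q (insert a S)))"
    unfolding feasible_realloc_def
    apply (rule exI[of _ "mix q S"], rule exI[of _ a], rule exI[of _ "q a"])
    using mix_feasible[OF g0 fq] aK e2 qa by (metis order_refl)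
  from insert have IH: "(feasible_realloc L K x g)\<^sup>*\<^sup>* (withdrawal K (mix q S)) (withdrawal K (mix q {}))
       \<and> (feasible_realloc L K x g)\<^sup>*\<^sup>* (withdrawal K (mix q {})) (withdrawal K (mix q S))" by auto
  show ?case using IH s1 s2
    by (meson converse_rtranclp_into_rtranclp rtranclp.rtrancl_into_rtrancl)
qed

theorem mainTheorem12:
  fixes L K :: nat and x :: "nat \<Rightarrow> nat" and g :: "nat \<Rightarrow> nat \<Rightarrow> bool"
    and y y' :: "nat \<Rightarrow> nat"
  assumes "x 0 = 0"
    and "\<forall>j. g 0 j"
    and "feasible_withdrawal L K x g y"
    and "feasible_withdrawal L K x g y'"
  shows "(feasible_realloc L K x g)\<^sup>*\<^sup>* y y'"
proof -
  obtain q where q: "feasible_control L K x g q" "withdrawal K q = y"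
    using assms(3) unfolding feasible_withdrawal_def by auto
  obtain q' where q': "feasible_control L K x g q'" "withdrawal K q' = y'"
    using assms(4) unfolding feasible_withdrawal_def by auto
  have z: "mix q {} = mix q' {}" by (simp add: mix_def)
  have a: "(feasible_realloc L K x g)\<^sup>*\<^sup>* y (withdrawal K (mix q {}))"
    using down[OF assms(2) q(1), of "{1..K}"] q(2) mix_full by auto
  have b: "(feasible_realloc L K x g)\<^sup>*\<^sup>* (withdrawal K (mix q {})) y'"
    using down[OF assms(2) q'(1), of "{1..K}"] q'(2) mix_full z by auto
  show ?thesis using a b by (rule rtranclp_trans)
qed

end
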